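(* The Weighted Covering VCCR satisfies Positive Involvement in Defeat: for every linear profile $\mathbf P$ and $x,y\in X(\mathbf P)$, if $(x,y)\notin wc(\mathbf P)$ and $\mathbf P'$ is obtained from $\mathbf P$ by adding one new voter whose ballot ranks $y$ above $x$, then $(x,y)\notin wc(\mathbf P')$.
   Context: Profiles: $\mathbf P:V\to\mathcal L(X)$, $V$ nonempty finite set of voters, $X=X(\mathbf P)$ nonempty finite set of candidates, $\mathcal L(X)$ strict linear orders. $\mathrm{Margin}_{\mathbf P}(x,y)$ = #voters ranking $x$ above $y$ minus #ranking $y$ above $x$. Weighted Covering: $(x,y)\in wc(\mathbf P)$ iff $\mathrm{Margin}_{\mathbf P}(x,y)>0$ and $\mathrm{Margin}_{\mathbf P}(x,z)\ge\mathrm{Margin}_{\mathbf P}(y,z)$ for all $z\in X(\mathbf P)$. *)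

theory Defs
  imports Main
begin

text \<open>A strict linear order on the candidate set X, as a relation contained in X \<times> X;
 (a,b) \<in> R means a is ranked above b.\<close>
definition lin_order_on :: "'c set \<Rightarrow> 'c rel \<Rightarrow> bool" where
  "lin_order_on X R \<longleftrightarrow> R \<subseteq> X \<times> X \<and> strict_linear_order_on X R"

definition profile :: "'v set \<Rightarrow> 'c set \<Rightarrow> ('v \<Rightarrow> 'c rel) \<Rightarrow> bool" where
  "profile V X P \<longleftrightarrow> finite V \<and> V \<noteq> {} \<and> finite X \<and> X \<noteq> {} \<and>
     (\<forall>v\<in>V. lin_order_on X (P v))"

definition margin :: "'v set \<Rightarrow> ('v \<Rightarrow> 'c rel) \<Rightarrow> 'c \<Rightarrow> 'c \<Rightarrow> int" where
  "margin V P x y = int (card {v\<in>V. (x,y) \<in> P v}) - int (card {v\<in>V. (y,x) \<in> P v})"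

definition wc :: "'v set \<Rightarrow> 'c set \<Rightarrow> ('v \<Rightarrow> 'c rel) \<Rightarrow> 'c \<Rightarrow> 'c \<Rightarrow> bool" where
  "wc V X P x y \<longleftrightarrow> margin V P x y > 0 \<and> (\<forall>z\<in>X. margin V P x z \<ge> margin V P y z)"

end

theory Submission
  imports Defs
begin

lemma card_upd:
  assumes "finite V" "i \<notin> V"
  shows "int (card {v\<in>insert i V. (a,b) \<in> (P(i:=R)) v}) =
         int (card {v\<in>V. (a,b) \<in> P v}) + (if (a,b) \<in> R then 1 else 0)"
proof -
  have e: "{v\<in>V. (a,b) \<in> (P(i:=R)) v} = {v\<in>V. (a,b) \<in> P v}"
    using assms by auto
  show ?thesis
  proof (cases "(a,b) \<in> R")
    case True
    then have "{v\<in>insert i V. (a,b) \<in> (P(i:=R)) v} = insert i {v\<in>V. (a,b) \<in> P v}"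
      using assms by auto
    then show ?thesis using True assms by simp
  next
    case False
    then have "{v\<in>insert i V. (a,b) \<in> (P(i:=R)) v} = {v\<in>V. (a,b) \<in> P v}"
      using assms by auto
    then show ?thesis using False by simp
  qed
qed

lemma margin_upd:
  assumes "finite V" "i \<notin> V"
  shows "margin (insert i V) (P(i:=R)) a b = margin V P a b
     + (if (a,b) \<in> R then 1 else 0) - (if (b,a) \<in> R then 1 else 0)"
  unfolding margin_def using card_upd[OF assms, of a b P R] card_upd[OF assms, of b a P R] by simp

theorem proposition3p16:
  fixes V :: "'v set" and X :: "'c set" and P :: "'v \<Rightarrow> 'c rel"
    and i :: 'v and R :: "'c rel" and x y :: 'c
  assumes "profile V X P"
    and "x \<in> X" and "y \<in> X"
    and "\<not> wc V X P x y"
    and "i \<notin> V"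
    and "lin_order_on X R"
    and "(y, x) \<in> R"
  shows "\<not> wc (insert i V) X (P(i := R)) x y"
proof
  assume w: "wc (insert i V) X (P(i := R)) x y"
  have fin: "finite V" using assms(1) unfolding profile_def by auto
  note mu = margin_upd[OF fin assms(5), of P R]
  have lo: "R \<subseteq> X \<times> X" "strict_linear_order_on X R" using assms(6) unfolding lin_order_on_def by auto
  have irr: "\<And>a. (a,a) \<notin> R" using lo(2) unfolding strict_linear_order_on_def irrefl_def by auto
  have tr: "\<And>a b c. (a,b) \<in> R \<Longrightarrow> (b,c) \<in> R \<Longrightarrow> (a,c) \<in> R"
    using lo(2) unfolding strict_linear_order_on_def trans_def by blast
  have tot: "\<And>a b. a \<in> X \<Longrightarrow> b \<in> X \<Longrightarrow> a \<noteq> b \<Longrightarrow> (a,b) \<in> R \<or> (b,a) \<in> R"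
    using lo(2) unfolding strict_linear_order_on_def total_on_def by blast
  have asy: "\<And>a b. (a,b) \<in> R \<Longrightarrow> (b,a) \<notin> R" using irr tr by blast
  have m1: "margin V P x y > 0" using w mu[of x y] assms(7) asy unfolding wc_def by (auto split: if_splits)
  then obtain z where z: "z \<in> X" "margin V P x z < margin V P y z"
    using assms(4) unfolding wc_def by force
  have "margin (insert i V) (P(i := R)) x z \<ge> margin (insert i V) (P(i := R)) y z"
    using w z(1) unfolding wc_def by blast
  moreover have "(if (x,z) \<in> R then 1 else 0) - (if (z,x) \<in> R then 1 else 0)
      \<le> (if (y,z) \<in> R then 1 else 0) - ((if (z,y) \<in> R then 1 else 0)::int)"
  proof (cases "z = x \<or> z = y")
    case True then show ?thesis using assms(7) asy irr by auto
  next
    case False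
    then have "(x,z) \<in> R \<or> (z,x) \<in> R" "(y,z) \<in> R \<or> (z,y) \<in> R"
      using tot z(1) assms(2,3) by auto
    moreover have "(x,z) \<in> R \<Longrightarrow> (y,z) \<in> R" using tr assms(7) by blast
    ultimately show ?thesis using asy by (cases "(x,z) \<in> R"; cases "(y,z) \<in> R") auto
  qed
  ultimately show False using z(2) mu[of x z] mu[of y z] by linarith
qed

end
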